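(* For all integers $m,n\ge1$, $$S_{m,n}(q)=\sum_{r=0}^{\lfloor m/2\rfloor}(-1)^r\left[\binom{m-1}{r}-\binom{m-1}{r-2}\right]\frac{(1-q^{(\frac{m+1}{2}-r)n})(1+(-1)^mq^{(\frac{m+1}{2}-r)(n+1)})q^{rn}}{(1-q^2)(1-q)^{m-1}(1-q^{\frac{m+1}{2}-r})}.$$
   Context: $q$ is an indeterminate and $q^{1/2}$ a fixed formal square root of $q$; identities are identities of rational functions in $q^{1/2}$. For integers $m,n\ge1$, $$S_{m,n}(q)=\sum_{k=1}^{n}\frac{1-q^{2k}}{1-q^2}\left(\frac{1-q^k}{1-q}\right)^{m-1}q^{\frac{m+1}{2}(n-k)}.$$ Binomial coefficients $\binom{a}{b}$ with integers $a,b$ are taken to be $0$ when $b<0$ or when $0\le a<b$. *)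

theory Defs
  imports "HOL-Computational_Algebra.Polynomial" "HOL-Computational_Algebra.Fraction_Field"
begin

type_synonym ratfun = "rat poly fract"

text \<open>The formal square root q^(1/2) of q; q itself is qh^2.\<close>
definition qh :: ratfun where
  "qh = Fract [:0, 1:] 1"

text \<open>q^(e/2), for a natural number e.\<close>
definition qhalf :: "nat \<Rightarrow> ratfun" where
  "qhalf e = qh ^ e"

text \<open>Integer binomial coefficient with the convention: 0 if b < 0, 0 if 0 \<le> a < b.\<close>
definition ibinom :: "int \<Rightarrow> int \<Rightarrow> rat" where
  "ibinom a b = (if b < 0 then 0 else (of_int a) gchoose (nat b))"

definition S :: "nat \<Rightarrow> nat \<Rightarrow> ratfun" where
  "S m n = (\<Sum>k=1..n. ((1 - qhalf (4*k)) / (1 - qhalf 4)) *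
              ((1 - qhalf (2*k)) / (1 - qhalf 2)) ^ (m - 1) *
              qhalf ((m + 1) * (n - k)))"

end

theory Submission
  imports Defs
begin



definition cc :: "nat \<Rightarrow> nat \<Rightarrow> int" where
  "cc p j = (-1)^j * (int (p choose j) - (if j < 2 then 0 else int (p choose (j-2))))"

lemma expA0:
  fixes y :: "'a::comm_ring_1"
  shows "(1 - y^2)^p = (\<Sum>j=0..p. (-1)^j * of_nat (p choose j) * y^(2*j))"
proof -
  have "(1 - y^2)^p = (-(y^2) + 1)^p" by simp
  also have "\<dots> = (\<Sum>k\<le>p. of_nat (p choose k) * (-(y^2))^k * 1^(p-k))"
    by (rule binomial_ring)
  also have "\<dots> = (\<Sum>j=0..p. (-1)^j * of_nat (p choose j) * y^(2*j))"
    unfolding atMost_atLeast0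
  proof (rule sum.cong[OF refl])
    fix k assume "k \<in> {0..p}"
    have "(-(y^2))^k = (-1)^k * y^(2*k)"
      by (metis mult_minus1 power_mult_distrib power_mult)
    then show "of_nat (p choose k) * (-(y^2))^k * 1^(p-k) = (-1)^k * of_nat (p choose k) * y^(2*k)"
      by (simp only: power_one mult_1_right mult_1_left mult_ac)
  qed
  finally show ?thesis .
qed

lemma expA:
  fixes y :: "'a::comm_ring_1"
  shows "(1 - y^2)^p = (\<Sum>j=0..p+2. (-1)^j * of_nat (p choose j) * y^(2*j))"
  unfolding expA0
proof (rule sum.mono_neutral_left)
  show "\<forall>i\<in>{0..p + 2} - {0..p}. (-1)^i * of_nat (p choose i) * y^(2*i) = 0"
  proof
    fix i assume "i \<in> {0..p + 2} - {0..p}"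
    then have "p < i" by auto
    then have "p choose i = 0" by (rule binomial_eq_0)
    then show "(-1)^i * of_nat (p choose i) * y^(2*i) = 0" by (simp only: of_nat_0 mult_zero_left mult_zero_right)
  qed
qed auto

lemma expB:
  fixes y :: "'a::comm_ring_1"
  shows "y^4 * (1 - y^2)^p = (\<Sum>j=0..p+2. (if j < 2 then 0 else (-1)^j * of_nat (p choose (j-2))) * y^(2*j))"
proof -
  have "(\<Sum>j=0..p+2. (if j < 2 then 0 else (-1)^j * of_nat (p choose (j-2))) * y^(2*j))
     = (\<Sum>j=0+2..p+2. (if j < 2 then 0 else (-1)^j * of_nat (p choose (j-2))) * (y^(2*j)::'a))"
    by (rule sum.mono_neutral_right) auto
  also have "\<dots> = (\<Sum>j=0..p. (if j+2 < 2 then 0 else (-1)^(j+2) * of_nat (p choose (j+2-2))) * y^(2*(j+2)))"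
    by (rule sum.shift_bounds_cl_nat_ivl)
  also have "\<dots> = y^4 * (\<Sum>j=0..p. (-1)^j * of_nat (p choose j) * y^(2*j))"
    unfolding sum_distrib_left
  proof (rule sum.cong[OF refl])
    fix j assume "j \<in> {0..p}"
    have e: "2*(j+2) = 4 + 2*j" by simp
    have "y^(2*(j+2)) = y^4 * y^(2*j)" by (simp only: e power_add)
    then show "(if j+2 < 2 then 0 else (-1)^(j+2) * of_nat (p choose (j+2-2))) * y^(2*(j+2))
       = y^4 * ((-1)^j * of_nat (p choose j) * y^(2*j))" by (simp add: mult_ac)
  qed
  also have "\<dots> = y^4 * (1 - y^2)^p" by (simp only: expA0)
  finally show ?thesis by (rule sym)
qed

lemma expC:
  fixes y :: "'a::comm_ring_1"
  shows "(1 - y^4) * (1 - y^2)^p = (\<Sum>j=0..p+2. of_int (cc p j) * y^(2*j))"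
proof -
  have "(1 - y^4) * (1 - y^2)^p = (1 - y^2)^p - y^4 * (1 - y^2)^p" by (simp add: algebra_simps)
  also have "\<dots> = (\<Sum>j=0..p+2. of_int (cc p j) * y^(2*j))"
    apply (subst expB, subst expA)
    unfolding sum_subtractf[symmetric]
  proof (rule sum.cong[OF refl])
    fix j assume "j \<in> {0..p+2}"
    have "(of_int (cc p j) :: 'a) = (-1)^j * (of_nat (p choose j) - (if j < 2 then 0 else of_nat (p choose (j-2))))"
      by (simp add: cc_def)
    then show "(-1)^j * of_nat (p choose j) * y^(2*j) - (if j < 2 then 0 else (-1)^j * of_nat (p choose (j-2))) * y^(2*j)
      = of_int (cc p j) * y^(2*j)"
      by (cases "j < 2") (simp_all add: ring_distribs mult_ac)
  qed
  finally show ?thesis .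
qed

lemma cc_sym:
  assumes "j \<le> p + 2"
  shows "cc p (p + 2 - j) = (-1)^(p+1) * cc p j"
proof -
  have b1: "int (p choose (p + 2 - j)) = (if j < 2 then 0 else int (p choose (j - 2)))"
  proof (cases "j < 2")
    case True then show ?thesis by (simp add: binomial_eq_0)
  next
    case False
    then have "p + 2 - j = p - (j - 2)" "j - 2 \<le> p" using assms by auto
    then show ?thesis using False binomial_symmetric[of "j-2" p] by simp
  qed
  have b2: "(if p + 2 - j < 2 then 0 else int (p choose (p + 2 - j - 2))) = int (p choose j)"
  proof (cases "j \<le> p")
    case True
    then have "p + 2 - j - 2 = p - j" "\<not> p + 2 - j < 2" by auto
    then show ?thesis using True binomial_symmetric[of "j" p] by simp
  next
    case False
    then have "p + 2 - j < 2" by simp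
    then show ?thesis using False by (simp add: binomial_eq_0)
  qed
  have s: "(-1::int)^(p+2-j) = (-1)^(p+1) * (-1) * (-1)^j"
    using assms by (simp add: minus_one_power_iff)
  show ?thesis unfolding cc_def b2 b1 s by (simp add: algebra_simps)
qed



lemma sum_pair:
  fixes f :: "nat \<Rightarrow> 'a::comm_monoid_add"
  assumes "N \<ge> 1" "even N \<Longrightarrow> f (N div 2) = 0"
  shows "(\<Sum>j=0..N. f j) = (\<Sum>r=0..(N-1) div 2. f r + f (N - r))"
  using assms
proof (induction N arbitrary: f rule: less_induct)
  case (less N)
  show ?case
  proof (cases "N \<le> 2")
    case True
    then have "N = 1 \<or> N = 2" using less.prems(1) by auto
    then show ?thesis
    proof
      assume "N = 1" then show ?thesis by (simp add: numeral_2_eq_2)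
    next
      assume N2: "N = 2"
      then have "f 1 = 0" using less.prems(2) by simp
      then show ?thesis using N2 by (simp add: numeral_2_eq_2)
    qed
  next
    case False
    then obtain M where M: "N = Suc (Suc M)" "M \<ge> 1"
    proof -
      have "N = Suc (Suc (N - 2)) \<and> N - 2 \<ge> 1" using False by auto
      then show ?thesis using that by blast
    qed
    define g where "g = f \<circ> Suc"
    have IH: "(\<Sum>j=0..M. g j) = (\<Sum>r=0..(M-1) div 2. g r + g (M - r))"
    proof (rule less.IH)
      show "M < N" using M by simp
      show "1 \<le> M" using M by simp
      assume "even M"
      then have "even N" using M by simp
      then have "f (N div 2) = 0" using less.prems(2) by simp
      moreover have "N div 2 = Suc (M div 2)" using M by simp
      ultimately show "g (M div 2) = 0" unfolding g_def by simp
    qed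
    have L: "(\<Sum>j=0..N. f j) = f 0 + (\<Sum>j=0..M. g j) + f N"
      unfolding M(1) g_def
      by (simp only: sum.atLeast0_atMost_Suc[of f "Suc M"] sum.atLeast0_atMost_Suc_shift[of f M])
    have e: "(N - 1) div 2 = Suc ((M - 1) div 2)" using M by simp
    have R: "(\<Sum>r=0..(N-1) div 2. f r + f (N - r)) = (f 0 + f N) + (\<Sum>r=0..(M-1) div 2. g r + g (M - r))"
      unfolding e sum.atLeast0_atMost_Suc_shift
    proof -
      have "(\<Sum>r=0..(M-1) div 2. ((\<lambda>r. f r + f (N - r)) \<circ> Suc) r) = (\<Sum>r=0..(M-1) div 2. g r + g (M - r))"
      proof (rule sum.cong[OF refl])
        fix r assume "r \<in> {0..(M-1) div 2}"
        then have "r \<le> M" by auto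
        then have "N - Suc r = Suc (M - r)" using M by simp
        then show "((\<lambda>r. f r + f (N - r)) \<circ> Suc) r = g r + g (M - r)" unfolding g_def by simp
      qed
      then show "f 0 + f (N - 0) + (\<Sum>r=0..(M-1) div 2. ((\<lambda>r. f r + f (N - r)) \<circ> Suc) r) = (f 0 + f N) + (\<Sum>r=0..(M-1) div 2. g r + g (M - r))"
        by simp
    qed
    show ?thesis unfolding L R IH by (simp add: add_ac)
  qed
qed


lemma geo1:
  fixes z :: "'a::field"
  shows "(1 - z) * (\<Sum>k=1..n. z^(n-k)) = 1 - z^n"
proof -
  have "(\<Sum>k=1..n. z^(n-k)) = (\<Sum>i<n. z^(n - Suc i))"
    by (simp add: sum.atLeast1_atMost_eq)
  then show ?thesis by (simp add: one_diff_power_eq')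
qed

lemma geo2:
  fixes z :: "'a::field"
  shows "(1 - z) * (\<Sum>k=1..n. z^(n+k)) = z^(n+1) * (1 - z^n)"
proof -
  have "(\<Sum>k=1..n. z^(n+k)) = (\<Sum>i<n. z^(n + Suc i))"
    by (simp add: sum.atLeast1_atMost_eq)
  also have "\<dots> = z^(n+1) * (\<Sum>i<n. z^i)"
    by (simp add: sum_distrib_left power_add mult_ac)
  finally show ?thesis by (simp add: one_diff_power_eq mult_ac)
qed

definition FF :: "'a::field \<Rightarrow> nat \<Rightarrow> nat \<Rightarrow> nat \<Rightarrow> 'a" where
  "FF x p n j = (\<Sum>k=1..n. of_int (cc p j) * (x^k)^(2*j) * x^((p+2)*(n-k)))"

lemma pair_r:
  fixes x :: "'a::field"
  assumes r: "2*r \<le> p + 2" and nz: "1 - x^(p+2-2*r) \<noteq> 0"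
  shows "FF x p n r + FF x p n (p+2-r) =
    of_int (cc p r) * ((1 - x^((p+2-2*r)*n)) * (1 + (-1)^(p+1) * x^((p+2-2*r)*(n+1))) * x^(2*r*n))
      / (1 - x^(p+2-2*r))"
proof -
  define e where "e = p + 2 - 2*r"
  define z where "z = x^e"
  have pe: "p + 2 = e + 2*r" using r unfolding e_def by simp
  have pr: "p + 2 - r = e + r" using r unfolding e_def by simp
  have c: "cc p (p+2-r) = (-1)^(p+1) * cc p r" by (rule cc_sym) (use r in simp)
  have t1: "(x^k)^(2*r) * x^((p+2)*(n-k)) = x^(2*r*n) * z^(n-k)" if "k \<le> n" for k
  proof -
    obtain d where d: "n = d + k" using \<open>k \<le> n\<close> le_iff_add by (metis add.commute)
    have "k*(2*r) + (e+2*r)*d = 2*r*n + e*d" unfolding d by (simp add: algebra_simps)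
    then show ?thesis unfolding z_def pe d by (simp add: power_mult[symmetric] power_add[symmetric] mult_ac add_ac)
  qed
  have t2: "(x^k)^(2*(p+2-r)) * x^((p+2)*(n-k)) = x^(2*r*n) * z^(n+k)" if "k \<le> n" for k
  proof -
    obtain d where d: "n = d + k" using \<open>k \<le> n\<close> le_iff_add by (metis add.commute)
    have "k*(2*(e+r)) + (e+2*r)*d = 2*r*n + e*(n+k)" unfolding d by (simp add: algebra_simps)
    then show ?thesis unfolding z_def pe pr d by (simp add: power_mult[symmetric] power_add[symmetric] mult_ac add_ac)
  qed
  have F1: "FF x p n r = of_int (cc p r) * x^(2*r*n) * (\<Sum>k=1..n. z^(n-k))"
    unfolding FF_def sum_distrib_left
  proof (rule sum.cong[OF refl])
    fix k assume "k \<in> {1..n}"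
    then have "k \<le> n" by simp
    then show "of_int (cc p r) * (x^k)^(2*r) * x^((p+2)*(n-k)) = of_int (cc p r) * x^(2*r*n) * z^(n-k)"
      by (simp only: mult.assoc t1)
  qed
  have F2: "FF x p n (p+2-r) = (-1)^(p+1) * of_int (cc p r) * x^(2*r*n) * (\<Sum>k=1..n. z^(n+k))"
    unfolding FF_def sum_distrib_left
  proof (rule sum.cong[OF refl])
    fix k assume "k \<in> {1..n}"
    then have "k \<le> n" by simp
    have c': "of_int (cc p (p+2-r)) = (-1)^(p+1) * (of_int (cc p r)::'a)" by (simp only: c of_int_mult of_int_power of_int_minus of_int_1)
    show "of_int (cc p (p+2-r)) * (x^k)^(2*(p+2-r)) * x^((p+2)*(n-k)) = (-1)^(p+1) * of_int (cc p r) * x^(2*r*n) * z^(n+k)"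
      using \<open>k \<le> n\<close> by (simp only: mult.assoc t2 c')
  qed
  have nz': "1 - z \<noteq> 0" using nz unfolding z_def e_def .
  have H: "(1 - z) * (FF x p n r + FF x p n (p+2-r)) =
     of_int (cc p r) * ((1 - z^n) * (1 + (-1)^(p+1) * z^(n+1)) * x^(2*r*n))"
  proof -
    define A where "A = (\<Sum>k=1..n. z^(n-k))"
    define B where "B = (\<Sum>k=1..n. z^(n+k))"
    have gA: "(1 - z) * A = 1 - z^n" unfolding A_def by (rule geo1)
    have gB: "(1 - z) * B = z^(n+1) * (1 - z^n)" unfolding B_def by (rule geo2)
    have "(1 - z) * (FF x p n r + FF x p n (p+2-r)) =
      of_int (cc p r) * x^(2*r*n) * ((1 - z) * A) + (-1)^(p+1) * of_int (cc p r) * x^(2*r*n) * ((1 - z) * B)"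
      unfolding F1 F2 A_def[symmetric] B_def[symmetric] by (simp add: algebra_simps)
    also have "\<dots> = of_int (cc p r) * ((1 - z^n) * (1 + (-1)^(p+1) * z^(n+1)) * x^(2*r*n))"
      unfolding gA gB by (simp add: algebra_simps)
    finally show ?thesis .
  qed
  have L: "FF x p n r + FF x p n (p+2-r) =
     of_int (cc p r) * ((1 - z^n) * (1 + (-1)^(p+1) * z^(n+1)) * x^(2*r*n)) / (1 - z)"
    by (metis H nz' nonzero_mult_div_cancel_left)
  then show ?thesis by (simp only: z_def e_def power_mult)
qed


lemma fr1: "(a::'a::field)/b * (c/d) ^ p * w = a * c^p * w / (b * d^p)"
  by (simp add: power_divide)

lemma cc_mid:
  assumes "even (p + 2)"
  shows "cc p ((p+2) div 2) = 0"
proof -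
  have j: "p + 2 - (p+2) div 2 = (p+2) div 2" using assms by auto
  have "cc p (p + 2 - (p+2) div 2) = (-1)^(p+1) * cc p ((p+2) div 2)"
    by (rule cc_sym) simp
  moreover have "(-1::int)^(p+1) = -1" using assms by simp
  ultimately show ?thesis unfolding j by simp
qed

lemma main_gen:
  fixes x :: "'a::field" and p n :: nat
  assumes nz: "\<And>r. r \<le> (p+1) div 2 \<Longrightarrow> 1 - x^(p+2-2*r) \<noteq> 0"
  shows "(\<Sum>k=1..n. (1 - x^(4*k))/(1 - x^4) * ((1 - x^(2*k))/(1 - x^2))^p * x^((p+2)*(n-k))) =
   (\<Sum>r=0..(p+1) div 2. of_int (cc p r) * ((1 - x^((p+2-2*r)*n)) * (1 + (-1)^(p+1) * x^((p+2-2*r)*(n+1))) * x^(2*r*n))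
      / ((1 - x^4) * (1 - x^2)^p * (1 - x^(p+2-2*r))))"
proof -
  define D where "D = (1 - x^4) * (1 - x^2)^p"
  have s1: "(1 - x^(4*k))/(1 - x^4) * ((1 - x^(2*k))/(1 - x^2))^p * x^((p+2)*(n-k))
     = (\<Sum>j=0..p+2. of_int (cc p j) * (x^k)^(2*j) * x^((p+2)*(n-k))) / D" for k
  proof -
    have e: "x^(4*k) = (x^k)^4" "x^(2*k) = (x^k)^2" by (simp_all add: power_mult[symmetric] mult.commute)
    have "(1 - x^(4*k))/(1 - x^4) * ((1 - x^(2*k))/(1 - x^2))^p * x^((p+2)*(n-k))
       = ((1 - (x^k)^4) * (1 - (x^k)^2)^p) * x^((p+2)*(n-k)) / D"
      unfolding D_def e by (rule fr1)
    also have "\<dots> = (\<Sum>j=0..p+2. of_int (cc p j) * (x^k)^(2*j) * x^((p+2)*(n-k))) / D"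
      unfolding expC sum_distrib_right ..
    finally show ?thesis .
  qed
  have "(\<Sum>k=1..n. (1 - x^(4*k))/(1 - x^4) * ((1 - x^(2*k))/(1 - x^2))^p * x^((p+2)*(n-k)))
     = (\<Sum>k=1..n. \<Sum>j=0..p+2. of_int (cc p j) * (x^k)^(2*j) * x^((p+2)*(n-k))) / D"
    unfolding s1 sum_divide_distrib ..
  also have "\<dots> = (\<Sum>j=0..p+2. FF x p n j) / D"
    unfolding FF_def by (subst sum.swap) (rule refl)
  also have "(\<Sum>j=0..p+2. FF x p n j) = (\<Sum>r=0..(p+2-1) div 2. FF x p n r + FF x p n (p+2-r))"
  proof (rule sum_pair)
    assume "even (p+2)"
    then have "cc p ((p+2) div 2) = 0" by (rule cc_mid)
    then show "FF x p n ((p+2) div 2) = 0" unfolding FF_def by simp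
  qed simp
  also have "(p+2-1) div 2 = (p+1) div 2" by simp
  also have "(\<Sum>r=0..(p+1) div 2. FF x p n r + FF x p n (p+2-r)) / D =
     (\<Sum>r=0..(p+1) div 2. (FF x p n r + FF x p n (p+2-r)) / D)"
    by (rule sum_divide_distrib)
  also have "\<dots> = (\<Sum>r=0..(p+1) div 2. of_int (cc p r) * ((1 - x^((p+2-2*r)*n)) * (1 + (-1)^(p+1) * x^((p+2-2*r)*(n+1))) * x^(2*r*n))
      / ((1 - x^4) * (1 - x^2)^p * (1 - x^(p+2-2*r))))"
  proof (rule sum.cong[OF refl])
    fix r assume "r \<in> {0..(p+1) div 2}"
    then have r: "r \<le> (p+1) div 2" by simp
    have "FF x p n r + FF x p n (p+2-r) =
      of_int (cc p r) * ((1 - x^((p+2-2*r)*n)) * (1 + (-1)^(p+1) * x^((p+2-2*r)*(n+1))) * x^(2*r*n))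
      / (1 - x^(p+2-2*r))"
      by (rule pair_r) (use r nz[OF r] in auto)
    then show "(FF x p n r + FF x p n (p+2-r)) / D = of_int (cc p r) * ((1 - x^((p+2-2*r)*n)) * (1 + (-1)^(p+1) * x^((p+2-2*r)*(n+1))) * x^(2*r*n))
      / ((1 - x^4) * (1 - x^2)^p * (1 - x^(p+2-2*r)))"
      unfolding D_def by (simp only: divide_divide_eq_left mult.commute[of _ "1 - x^(p+2-2*r)"])
  qed
  finally show ?thesis .
qed


lemma qh_pow: "qh ^ e = Fract ([:0,1:] ^ e) 1"
proof (induction e)
  case 0 then show ?case by (simp add: One_fract_def)
next
  case (Suc e) then show ?case by (simp add: qh_def)
qed

lemma one_minus_qh_nz:
  assumes "e \<ge> 1"
  shows "1 - qh ^ e \<noteq> 0"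
proof
  assume "1 - qh ^ e = 0"
  moreover have "1 - qh ^ e = Fract (1 - [:0,1::rat:] ^ e) 1"
    unfolding qh_pow One_fract_def by simp
  ultimately have "Fract (1 - [:0,1::rat:] ^ e) 1 = Fract 0 1"
    unfolding Zero_fract_def by simp
  then have "(1::rat poly) - [:0,1:] ^ e = 0"
    using eq_fract(1)[of 1 1 "1 - [:0,1::rat:]^e" 0] by simp
  then have "[:0,1:] ^ e = (1::rat poly)" by simp
  then have "degree ([:0,1::rat:] ^ e) = 0" by simp
  moreover have "degree ([:0,1::rat:] ^ e) = e" by (simp add: degree_power_eq)
  ultimately show False using assms by simp
qed

lemma Fract_of_int_const: "Fract [: of_int k :: rat :] 1 = (of_int k :: ratfun)"
proof -
  have a: "Fract (of_int k :: rat poly) 1 = (of_int k :: ratfun)"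
  proof (cases k rule: int_cases)
    case (nonneg n)
    then show ?thesis using Fract_of_nat_eq[of n] by simp
  next
    case (neg n)
    have k1: "(of_int k :: rat poly) = - of_nat (Suc n)" using neg by simp
    have k2: "(of_int k :: ratfun) = - of_nat (Suc n)" using neg by simp
    have "Fract (of_int k :: rat poly) 1 = - Fract (of_nat (Suc n)) 1"
      unfolding k1 minus_fract ..
    also have "\<dots> = of_int k" unfolding k2 Fract_of_nat_eq ..
    finally show ?thesis .
  qed
  show ?thesis using a by (simp add: of_int_poly)
qed

lemma coeff_conv:
  assumes "m \<ge> 1"
  shows "(-1)^r * Fract [: ibinom (int m - 1) (int r) - ibinom (int m - 1) (int r - 2) :] 1 = (of_int (cc (m-1) r) :: ratfun)"
proof -
  have im: "int m - 1 = int (m - 1)" using assms by simp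
  have b1: "ibinom (int m - 1) (int r) = of_nat ((m-1) choose r)"
    unfolding ibinom_def im by (simp add: binomial_gbinomial)
  have b2: "ibinom (int m - 1) (int r - 2) = (if r < 2 then 0 else of_nat ((m-1) choose (r-2)))"
  proof (cases "r < 2")
    case True then show ?thesis unfolding ibinom_def by simp
  next
    case False
    then have "nat (int r - 2) = r - 2" by simp
    then show ?thesis using False unfolding ibinom_def im by (simp add: binomial_gbinomial)
  qed
  define k where "k = int ((m-1) choose r) - (if r < 2 then 0 else int ((m-1) choose (r-2)))"
  have "ibinom (int m - 1) (int r) - ibinom (int m - 1) (int r - 2) = of_int k"
    unfolding b1 b2 k_def by simp
  then have "Fract [: ibinom (int m - 1) (int r) - ibinom (int m - 1) (int r - 2) :] 1 = (of_int k :: ratfun)"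
    by (simp add: Fract_of_int_const)
  moreover have "cc (m-1) r = (-1)^r * k" unfolding cc_def k_def ..
  ultimately show ?thesis by simp
qed

theorem lemma2p1:
  fixes m n :: nat
  assumes "m \<ge> 1" and "n \<ge> 1"
  shows "S m n =
    (\<Sum>r=0..m div 2. (-1) ^ r *
       Fract [: ibinom (int m - 1) (int r) - ibinom (int m - 1) (int r - 2) :] 1 *
       ((1 - qhalf ((m + 1 - 2*r) * n)) *
        (1 + (-1) ^ m * qhalf ((m + 1 - 2*r) * (n + 1))) *
        qhalf (2 * r * n)) /
       ((1 - qhalf 4) * (1 - qhalf 2) ^ (m - 1) * (1 - qhalf (m + 1 - 2*r))))"
proof -
  have e1: "m - 1 + 2 = m + 1" and e2: "m - 1 + 1 = m" using assms(1) by auto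
  have G: "(\<Sum>k=1..n. (1 - qh^(4*k))/(1 - qh^4) * ((1 - qh^(2*k))/(1 - qh^2))^(m-1) * qh^((m+1)*(n-k))) =
   (\<Sum>r=0..m div 2. of_int (cc (m-1) r) * ((1 - qh^((m+1-2*r)*n)) * (1 + (-1)^m * qh^((m+1-2*r)*(n+1))) * qh^(2*r*n))
      / ((1 - qh^4) * (1 - qh^2)^(m-1) * (1 - qh^(m+1-2*r))))"
  proof -
    have "(\<Sum>k=1..n. (1 - qh^(4*k))/(1 - qh^4) * ((1 - qh^(2*k))/(1 - qh^2))^(m-1) * qh^((m-1+2)*(n-k))) =
     (\<Sum>r=0..(m-1+1) div 2. of_int (cc (m-1) r) * ((1 - qh^((m-1+2-2*r)*n)) * (1 + (-1)^(m-1+1) * qh^((m-1+2-2*r)*(n+1))) * qh^(2*r*n))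
      / ((1 - qh^4) * (1 - qh^2)^(m-1) * (1 - qh^(m-1+2-2*r))))"
    proof (rule main_gen)
      fix r assume "r \<le> (m - 1 + 1) div 2"
      then have "m - 1 + 2 - 2*r \<ge> 1" by simp
      then show "1 - qh^(m - 1 + 2 - 2*r) \<noteq> 0" by (rule one_minus_qh_nz)
    qed
    then show ?thesis unfolding e1 e2 .
  qed
  show ?thesis
    unfolding S_def qhalf_def G
  proof (rule sum.cong[OF refl])
    fix r assume "r \<in> {0..m div 2}"
    show "of_int (cc (m-1) r) * ((1 - qh^((m+1-2*r)*n)) * (1 + (-1)^m * qh^((m+1-2*r)*(n+1))) * qh^(2*r*n))
      / ((1 - qh^4) * (1 - qh^2)^(m-1) * (1 - qh^(m+1-2*r))) =
      (-1) ^ r * Fract [: ibinom (int m - 1) (int r) - ibinom (int m - 1) (int r - 2) :] 1 *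
       ((1 - qh^((m + 1 - 2*r) * n)) * (1 + (-1) ^ m * qh^((m + 1 - 2*r) * (n + 1))) * qh^(2 * r * n)) /
       ((1 - qh^4) * (1 - qh^2) ^ (m - 1) * (1 - qh^(m + 1 - 2*r)))"
      unfolding coeff_conv[OF assms(1)] ..
  qed
qed

end
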